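(* Let $x\neq0$ be represented by a tensor network on graph $G$ with $n$ vertices, and let $0\le\varepsilon_i\le\varepsilon$. Define $x^{(0)}=x$ and, for $i=1,\dots,n$: take a tensor network $(G,\mathbf C^{(1)},\dots,\mathbf C^{(n)})$ representing $x^{(i-1)}$ which is in canonical form centered at $v_i$, replace $\mathbf C^{(i)}$ by $\mathbf C^{(i)}+\delta^{(i)}$ with $\|\delta^{(i)}\|_F\le\varepsilon_i\|\mathbf C^{(i)}\|_F$, and let $x^{(i)}$ be the vectorized contraction of the resulting network. Then $\hat x=x^{(n)}$ satisfies $$\frac{\|\hat x-x\|_2}{\|x\|_2}\le n\varepsilon+O(\varepsilon^2)\quad(\varepsilon\to0).$$
   Context: Tensor network setup: A tensor network $(G,\mathbf T^{(1)},\dots,\mathbf T^{(n)})$ consists of a multigraph $G$ with vertices $v_1,\dots,v_n$, whose edges are either edges between distinct vertices (contracted legs) or self-loops (uncontracted legs), each edge having a dimension, and tensors $\mathbf T^{(j)}$ at $v_j$ with one mode per incident edge. Its contraction $\mathscr T_G(\mathbf T^{(1)},\dots,\mathbf T^{(n)})$ is obtained by summing over all contracted-edge indices the product of the entries of all $\mathbf T^{(j)}$. The environment matrix $M_{\mathbf T^{(j)}}$ of site $j$ is the matrix of the linear map $X\mapsto\mathrm{vec}(\mathscr T_G(\mathbf T^{(1)},\dots,X,\dots,\mathbf T^{(n)}))$ ($X$ in slot $j$) acting on $\mathrm{vec}(X)$. The network is in canonical form centered at $v_j$ if $M_{\mathbf T^{(j)}}$ is an isometry ($M^*M=I$). It is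 assumed that at every step such a canonical representation exists. *)

theory Defs
  imports "HOL-Analysis.Analysis"
begin

text \<open>A tensor network graph: vertices 0..<nv, edges 0..<ne, each edge e has endpoints
  ends e (a self-loop, i.e. both endpoints equal, is an uncontracted leg) and a dimension dim e.\<close>
record tn_graph =
  nv :: nat
  ne :: nat
  ends :: "nat \<Rightarrow> nat \<times> nat"
  dim :: "nat \<Rightarrow> nat"

definition wf_graph :: "tn_graph \<Rightarrow> bool" where
  "wf_graph G \<longleftrightarrow> (\<forall>e<ne G. fst (ends G e) < nv G \<and> snd (ends G e) < nv G \<and> 0 < dim G e)"

definition inc :: "tn_graph \<Rightarrow> nat \<Rightarrow> nat set" where
  "inc G j = {e. e < ne G \<and> (fst (ends G e) = j \<or> snd (ends G e) = j)}"

definition open_edges :: "tn_graph \<Rightarrow> nat set" where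
  "open_edges G = {e. e < ne G \<and> fst (ends G e) = snd (ends G e)}"

definition contr_edges :: "tn_graph \<Rightarrow> nat set" where
  "contr_edges G = {e. e < ne G \<and> fst (ends G e) \<noteq> snd (ends G e)}"

text \<open>Index assignments to a set S of edges (multi-indices); zero outside S.\<close>
definition assignments :: "tn_graph \<Rightarrow> nat set \<Rightarrow> (nat \<Rightarrow> nat) set" where
  "assignments G S = {\<iota>. (\<forall>e\<in>S. \<iota> e < dim G e) \<and> (\<forall>e. e \<notin> S \<longrightarrow> \<iota> e = 0)}"

definition restr :: "nat set \<Rightarrow> (nat \<Rightarrow> nat) \<Rightarrow> (nat \<Rightarrow> nat)" where
  "restr S \<iota> = (\<lambda>e. if e \<in> S then \<iota> e else 0)"

text \<open>A tensor at a vertex j is a function of multi-indices in assignments G (inc G j);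
  a network assigns a tensor to every vertex.\<close>
type_synonym tensor = "(nat \<Rightarrow> nat) \<Rightarrow> complex"
type_synonym network = "nat \<Rightarrow> tensor"

definition contract :: "tn_graph \<Rightarrow> network \<Rightarrow> tensor" where
  "contract G T \<omega> =
     (\<Sum>\<kappa>\<in>assignments G (contr_edges G).
        \<Prod>j<nv G. T j (restr (inc G j) (\<lambda>e. if e \<in> open_edges G then \<omega> e else \<kappa> e)))"

text \<open>Euclidean norm of the vectorized contraction (independent of the ordering of entries).\<close>
definition vnorm :: "tn_graph \<Rightarrow> tensor \<Rightarrow> real" where
  "vnorm G y = sqrt (\<Sum>\<omega>\<in>assignments G (open_edges G). (cmod (y \<omega>))\<^sup>2)"

definition frob :: "tn_graph \<Rightarrow> nat \<Rightarrow> tensor \<Rightarrow> real" where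
  "frob G j X = sqrt (\<Sum>a\<in>assignments G (inc G j). (cmod (X a))\<^sup>2)"

text \<open>Environment matrix of site j: row index = open multi-index, column index = multi-index
  of the tensor at j; column a is the image of the standard basis tensor a.\<close>
definition env :: "tn_graph \<Rightarrow> network \<Rightarrow> nat \<Rightarrow> (nat \<Rightarrow> nat) \<Rightarrow> (nat \<Rightarrow> nat) \<Rightarrow> complex" where
  "env G T j \<omega> a = contract G (T(j := (\<lambda>b. if b = a then 1 else 0))) \<omega>"

text \<open>Canonical form centered at vertex j: the environment matrix is an isometry, M^* M = I.\<close>
definition canonical_at :: "tn_graph \<Rightarrow> network \<Rightarrow> nat \<Rightarrow> bool" where
  "canonical_at G T j \<longleftrightarrow>
     (\<forall>a\<in>assignments G (inc G j). \<forall>b\<in>assignments G (inc G j).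
        (\<Sum>\<omega>\<in>assignments G (open_edges G). cnj (env G T j \<omega> a) * env G T j \<omega> b)
          = (if a = b then 1 else 0))"

end

theory Submission
  imports Defs
begin

lemma finite_assignments:
  assumes "finite S" shows "finite (assignments G S)"
proof -
  have inj: "inj_on (\<lambda>f. restrict f S) (assignments G S)"
  proof (rule inj_onI)
    fix f g assume f: "f \<in> assignments G S" and g: "g \<in> assignments G S"
      and eq: "restrict f S = restrict g S"
    show "f = g"
    proof
      fix e show "f e = g e"
        using f g fun_cong[OF eq, of e] by (cases "e \<in> S") (auto simp: assignments_def)
    qed
  qed
  have "(\<lambda>f. restrict f S) ` assignments G S \<subseteq> PiE S (\<lambda>e. {..<dim G e})"
    by (auto simp: assignments_def)
  moreover have "finite (PiE S (\<lambda>e. {..<dim G e}))" using assms by (simp add: finite_PiE)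
  ultimately show ?thesis using inj finite_imageD finite_subset by metis
qed

lemma fin_open: "finite (assignments G (open_edges G))"
  by (rule finite_assignments) (auto simp: open_edges_def)
lemma fin_inc: "finite (assignments G (inc G j))"
  by (rule finite_assignments) (auto simp: inc_def)
lemma fin_contr: "finite (assignments G (contr_edges G))"
  by (rule finite_assignments) (auto simp: contr_edges_def)

lemma vnorm_L2: "vnorm G y = L2_set (\<lambda>\<omega>. cmod (y \<omega>)) (assignments G (open_edges G))"
  by (simp add: vnorm_def L2_set_def)

lemma vnorm_triangle: "vnorm G (\<lambda>\<omega>. y \<omega> + z \<omega>) \<le> vnorm G y + vnorm G z"
proof -
  have "vnorm G (\<lambda>\<omega>. y \<omega> + z \<omega>) \<le> L2_set (\<lambda>\<omega>. cmod (y \<omega>) + cmod (z \<omega>)) (assignments G (open_edges G))"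
    unfolding vnorm_L2 by (rule L2_set_mono) (auto simp: norm_triangle_ineq)
  also have "\<dots> \<le> vnorm G y + vnorm G z" unfolding vnorm_L2 by (rule L2_set_triangle_ineq)
  finally show ?thesis .
qed

lemma vnorm_cong: "(\<And>\<omega>. \<omega> \<in> assignments G (open_edges G) \<Longrightarrow> y \<omega> = z \<omega>) \<Longrightarrow> vnorm G y = vnorm G z"
  unfolding vnorm_def by (simp cong: sum.cong)

lemma vnorm_nonneg: "0 \<le> vnorm G y" by (simp add: vnorm_def sum_nonneg)

lemma iso:
  fixes M :: "'a \<Rightarrow> 'b \<Rightarrow> complex"
  assumes "finite A" "finite B"
    and orth: "\<forall>a\<in>B. \<forall>b\<in>B. (\<Sum>\<omega>\<in>A. cnj (M \<omega> a) * M \<omega> b) = (if a = b then 1 else 0)"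
  shows "(\<Sum>\<omega>\<in>A. (cmod (\<Sum>a\<in>B. M \<omega> a * f a))\<^sup>2) = (\<Sum>a\<in>B. (cmod (f a))\<^sup>2)"
proof -
  have "complex_of_real (\<Sum>\<omega>\<in>A. (cmod (\<Sum>a\<in>B. M \<omega> a * f a))\<^sup>2)
     = (\<Sum>\<omega>\<in>A. cnj (\<Sum>a\<in>B. M \<omega> a * f a) * (\<Sum>b\<in>B. M \<omega> b * f b))"
    unfolding of_real_sum complex_norm_square by (simp add: mult.commute)
  also have "\<dots> = (\<Sum>\<omega>\<in>A. \<Sum>a\<in>B. \<Sum>b\<in>B. cnj (f a) * f b * (cnj (M \<omega> a) * M \<omega> b))"
    by (simp add: sum_distrib_left sum_distrib_right mult_ac)
  also have "\<dots> = (\<Sum>a\<in>B. \<Sum>b\<in>B. \<Sum>\<omega>\<in>A. cnj (f a) * f b * (cnj (M \<omega> a) * M \<omega> b))"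
    by (subst sum.swap) (simp add: sum.swap[of _ A])
  also have "\<dots> = (\<Sum>a\<in>B. \<Sum>b\<in>B. cnj (f a) * f b * (if a = b then 1 else 0))"
    using orth by (simp add: sum_distrib_left[symmetric])
  also have "\<dots> = (\<Sum>a\<in>B. cnj (f a) * f a)"
    using assms(2) by (simp add: if_distrib cong: if_cong)
  also have "\<dots> = complex_of_real (\<Sum>a\<in>B. (cmod (f a))\<^sup>2)"
    unfolding of_real_sum complex_norm_square by (simp add: mult.commute)
  finally show ?thesis using of_real_eq_iff by blast
qed

lemma idx_in:
  assumes "\<omega> \<in> assignments G (open_edges G)" "\<kappa> \<in> assignments G (contr_edges G)"
  shows "restr (inc G j) (\<lambda>e. if e \<in> open_edges G then \<omega> e else \<kappa> e) \<in> assignments G (inc G j)"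
  using assms by (auto simp: assignments_def restr_def inc_def open_edges_def contr_edges_def)

lemma contract_upd:
  assumes j: "j < nv G" and \<omega>: "\<omega> \<in> assignments G (open_edges G)"
  shows "contract G (T(j := X)) \<omega> = (\<Sum>a\<in>assignments G (inc G j). env G T j \<omega> a * X a)"
proof -
  define idx where "idx \<kappa> k = restr (inc G k) (\<lambda>e. if e \<in> open_edges G then \<omega> e else \<kappa> e)" for \<kappa> k
  define P where "P \<kappa> = (\<Prod>k\<in>{..<nv G} - {j}. T k (idx \<kappa> k))" for \<kappa>
  have split: "contract G (T(j := Y)) \<omega> = (\<Sum>\<kappa>\<in>assignments G (contr_edges G). Y (idx \<kappa> j) * P \<kappa>)" for Y
  proof -
    have "(\<Prod>k<nv G. (T(j := Y)) k (idx \<kappa> k)) = Y (idx \<kappa> j) * P \<kappa>" for \<kappa>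
    proof -
      have "(\<Prod>k<nv G. (T(j := Y)) k (idx \<kappa> k)) = (T(j := Y)) j (idx \<kappa> j) * (\<Prod>k\<in>{..<nv G} - {j}. (T(j := Y)) k (idx \<kappa> k))"
        using j by (subst prod.remove[of _ j]) auto
      also have "(\<Prod>k\<in>{..<nv G} - {j}. (T(j := Y)) k (idx \<kappa> k)) = P \<kappa>"
        unfolding P_def by (rule prod.cong) auto
      finally show ?thesis by simp
    qed
    then show ?thesis unfolding contract_def idx_def by simp
  qed
  have "(\<Sum>a\<in>assignments G (inc G j). env G T j \<omega> a * X a)
     = (\<Sum>a\<in>assignments G (inc G j). \<Sum>\<kappa>\<in>assignments G (contr_edges G). (if idx \<kappa> j = a then X a else 0) * P \<kappa>)"
    unfolding env_def split by (rule sum.cong[OF refl]) (simp add: sum_distrib_right, rule sum.cong, auto)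
  also have "\<dots> = (\<Sum>\<kappa>\<in>assignments G (contr_edges G). \<Sum>a\<in>assignments G (inc G j). (if idx \<kappa> j = a then X a else 0) * P \<kappa>)"
    by (rule sum.swap)
  also have "\<dots> = (\<Sum>\<kappa>\<in>assignments G (contr_edges G). X (idx \<kappa> j) * P \<kappa>)"
  proof (rule sum.cong)
    fix \<kappa> assume "\<kappa> \<in> assignments G (contr_edges G)"
    then have "idx \<kappa> j \<in> assignments G (inc G j)" using idx_in[OF \<omega>] unfolding idx_def by blast
    moreover have "(\<lambda>a. (if idx \<kappa> j = a then X a else 0) * P \<kappa>) = (\<lambda>a. if idx \<kappa> j = a then X a * P \<kappa> else 0)"
      by auto
    ultimately show "(\<Sum>a\<in>assignments G (inc G j). (if idx \<kappa> j = a then X a else 0) * P \<kappa>) = X (idx \<kappa> j) * P \<kappa>"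
      using fin_inc[of G j] by (simp only: sum.delta) simp
  qed simp
  finally show ?thesis using split by simp
qed

lemma vnorm_env:
  assumes "canonical_at G C j"
  shows "vnorm G (\<lambda>\<omega>. \<Sum>a\<in>assignments G (inc G j). env G C j \<omega> a * f a) = frob G j f"
  unfolding vnorm_def frob_def
  using iso[OF fin_open fin_inc, where M="env G C j" and f=f] assms unfolding canonical_at_def by simp

lemma step:
  assumes j: "j < nv G" and can: "canonical_at G C j" and fr: "frob G j d \<le> e * frob G j (C j)"
    and hx: "\<forall>\<omega>\<in>assignments G (open_edges G). x \<omega> = contract G C \<omega>"
    and hy: "\<forall>\<omega>\<in>assignments G (open_edges G). y \<omega> = contract G (C(j := \<lambda>a. C j a + d a)) \<omega>"
  shows "vnorm G (\<lambda>\<omega>. y \<omega> - x \<omega>) \<le> e * vnorm G x"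
proof -
  let ?B = "assignments G (inc G j)"
  have "vnorm G (\<lambda>\<omega>. y \<omega> - x \<omega>) = vnorm G (\<lambda>\<omega>. \<Sum>a\<in>?B. env G C j \<omega> a * d a)"
  proof (rule vnorm_cong)
    fix \<omega> assume \<omega>: "\<omega> \<in> assignments G (open_edges G)"
    have "x \<omega> = contract G (C(j := C j)) \<omega>" using hx \<omega> by simp
    also have "\<dots> = (\<Sum>a\<in>?B. env G C j \<omega> a * C j a)" by (rule contract_upd[OF j \<omega>])
    finally have 1: "x \<omega> = \<dots>" .
    have 2: "y \<omega> = (\<Sum>a\<in>?B. env G C j \<omega> a * (C j a + d a))"
      using hy \<omega> contract_upd[OF j \<omega>] by simp
    show "y \<omega> - x \<omega> = (\<Sum>a\<in>?B. env G C j \<omega> a * d a)"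
      unfolding 1 2 by (simp add: ring_distribs sum.distrib)
  qed
  also have "\<dots> = frob G j d" by (rule vnorm_env[OF can])
  also have "\<dots> \<le> e * frob G j (C j)" by (rule fr)
  also have "frob G j (C j) = vnorm G x"
  proof -
    have "vnorm G x = vnorm G (\<lambda>\<omega>. \<Sum>a\<in>?B. env G C j \<omega> a * C j a)"
      by (rule vnorm_cong) (use hx contract_upd[OF j, of _ C "C j"] in auto)
    then show ?thesis using vnorm_env[OF can] by simp
  qed
  finally show ?thesis .
qed

lemma pow_bound:
  fixes e :: real assumes "0 \<le> e" "e \<le> 1"
  shows "(1 + e) ^ n \<le> 1 + real n * e + 3 ^ n * e\<^sup>2"
proof (induction n)
  case 0 then show ?case by simp
next
  case (Suc n)
  have "(1 + e) ^ Suc n = (1 + e) * (1 + e) ^ n" by simp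
  also have "\<dots> \<le> (1 + e) * (1 + real n * e + 3 ^ n * e\<^sup>2)"
    using Suc assms by (intro mult_left_mono) auto
  also have "\<dots> = 1 + real (Suc n) * e + e\<^sup>2 * (real n + 3 ^ n + 3 ^ n * e)"
    by (simp add: algebra_simps power2_eq_square)
  also have "\<dots> \<le> 1 + real (Suc n) * e + e\<^sup>2 * 3 ^ Suc n"
  proof -
    have "real n \<le> 3 ^ n"
    proof -
      have "n < 3 ^ n" by (induction n) auto
      then have "real n < real (3 ^ n)" by linarith
      then show ?thesis by simp
    qed
    moreover have "3 ^ n * e \<le> (3::real) ^ n" using assms by simp
    moreover have "(3::real) ^ Suc n = 3 * 3 ^ n" by simp
    ultimately have "real n + 3 ^ n + 3 ^ n * e \<le> 3 ^ Suc n" by linarith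
    then show ?thesis by (intro add_left_mono mult_left_mono) auto
  qed
  finally show ?case by (simp add: mult.commute)
qed

theorem mainTheorem8:
  fixes G :: tn_graph and T0 :: network
  assumes "wf_graph G"
    and "\<exists>\<omega>\<in>assignments G (open_edges G). contract G T0 \<omega> \<noteq> 0"
  shows "\<exists>K \<epsilon>0. 0 < \<epsilon>0 \<and>
    (\<forall>\<epsilon> :: real. 0 < \<epsilon> \<and> \<epsilon> < \<epsilon>0 \<longrightarrow>
      (\<forall>(eps :: nat \<Rightarrow> real) (xs :: nat \<Rightarrow> tensor) (Cs :: nat \<Rightarrow> network) (ds :: nat \<Rightarrow> tensor).
        (\<forall>i<nv G. 0 \<le> eps i \<and> eps i \<le> \<epsilon>)
        \<and> (\<forall>\<omega>\<in>assignments G (open_edges G). xs 0 \<omega> = contract G T0 \<omega>)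
        \<and> (\<forall>i<nv G. \<forall>\<omega>\<in>assignments G (open_edges G). contract G (Cs i) \<omega> = xs i \<omega>)
        \<and> (\<forall>i<nv G. canonical_at G (Cs i) i)
        \<and> (\<forall>i<nv G. frob G i (ds i) \<le> eps i * frob G i (Cs i i))
        \<and> (\<forall>i<nv G. \<forall>\<omega>\<in>assignments G (open_edges G).
             xs (Suc i) \<omega> = contract G ((Cs i)(i := (\<lambda>a. Cs i i a + ds i a))) \<omega>)
        \<longrightarrow> vnorm G (\<lambda>\<omega>. xs (nv G) \<omega> - contract G T0 \<omega>) / vnorm G (contract G T0)
              \<le> real (nv G) * \<epsilon> + K * \<epsilon>\<^sup>2))"
proof -
  let ?A = "assignments G (open_edges G)"
  let ?n = "nv G"
  define N where "N = vnorm G (contract G T0)"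
  have Npos: "N > 0"
  proof -
    obtain \<omega> where \<omega>: "\<omega> \<in> ?A" "contract G T0 \<omega> \<noteq> 0" using assms(2) by blast
    have "0 < (cmod (contract G T0 \<omega>))\<^sup>2" using \<omega> by simp
    also have "\<dots> \<le> (\<Sum>\<omega>\<in>?A. (cmod (contract G T0 \<omega>))\<^sup>2)"
      using \<omega> fin_open[of G] by (intro member_le_sum) auto
    finally show ?thesis unfolding N_def vnorm_def by simp
  qed
  show ?thesis
  proof (rule exI[of _ "(3::real) ^ ?n"], rule exI[of _ "1::real"], intro conjI allI impI)
    fix \<epsilon> :: real and eps xs Cs ds
    assume e: "0 < \<epsilon> \<and> \<epsilon> < 1"
    assume H: "(\<forall>i<nv G. 0 \<le> eps i \<and> eps i \<le> \<epsilon>)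
        \<and> (\<forall>\<omega>\<in>assignments G (open_edges G). xs 0 \<omega> = contract G T0 \<omega>)
        \<and> (\<forall>i<nv G. \<forall>\<omega>\<in>assignments G (open_edges G). contract G (Cs i) \<omega> = xs i \<omega>)
        \<and> (\<forall>i<nv G. canonical_at G (Cs i) i)
        \<and> (\<forall>i<nv G. frob G i (ds i) \<le> eps i * frob G i (Cs i i))
        \<and> (\<forall>i<nv G. \<forall>\<omega>\<in>assignments G (open_edges G).
             xs (Suc i) \<omega> = contract G ((Cs i)(i := (\<lambda>a. Cs i i a + ds i a))) \<omega>)"
    have st: "vnorm G (\<lambda>\<omega>. xs (Suc i) \<omega> - xs i \<omega>) \<le> \<epsilon> * vnorm G (xs i)" if i: "i < ?n" for i
    proof -
      have "vnorm G (\<lambda>\<omega>. xs (Suc i) \<omega> - xs i \<omega>) \<le> eps i * vnorm G (xs i)"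
        by (rule step[OF i, of "Cs i" "ds i"]) (use H i in auto)
      also have "\<dots> \<le> \<epsilon> * vnorm G (xs i)"
        using H i by (intro mult_right_mono vnorm_nonneg) auto
      finally show ?thesis .
    qed
    have x0: "vnorm G (xs 0) = N" unfolding N_def by (rule vnorm_cong) (use H in auto)
    have ind: "i \<le> ?n \<Longrightarrow> vnorm G (\<lambda>\<omega>. xs i \<omega> - xs 0 \<omega>) \<le> ((1 + \<epsilon>) ^ i - 1) * N
                \<and> vnorm G (xs i) \<le> (1 + \<epsilon>) ^ i * N" for i
    proof (induction i)
      case 0
      have "vnorm G (\<lambda>\<omega>. xs 0 \<omega> - xs 0 \<omega>) = 0" by (simp add: vnorm_def)
      then show ?case using x0 by simp
    next
      case (Suc i)
      then have i: "i < ?n" and IH: "vnorm G (\<lambda>\<omega>. xs i \<omega> - xs 0 \<omega>) \<le> ((1 + \<epsilon>) ^ i - 1) * N"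
        "vnorm G (xs i) \<le> (1 + \<epsilon>) ^ i * N" by auto
      have s: "vnorm G (\<lambda>\<omega>. xs (Suc i) \<omega> - xs i \<omega>) \<le> \<epsilon> * ((1 + \<epsilon>) ^ i * N)"
        using st[OF i] IH(2) e by (smt (verit) mult_left_mono)
      have t1: "vnorm G (\<lambda>\<omega>. xs (Suc i) \<omega> - xs 0 \<omega>) \<le> vnorm G (\<lambda>\<omega>. xs (Suc i) \<omega> - xs i \<omega>) + vnorm G (\<lambda>\<omega>. xs i \<omega> - xs 0 \<omega>)"
        using vnorm_triangle[of G "\<lambda>\<omega>. xs (Suc i) \<omega> - xs i \<omega>" "\<lambda>\<omega>. xs i \<omega> - xs 0 \<omega>"] by simp
      have t2: "vnorm G (xs (Suc i)) \<le> vnorm G (\<lambda>\<omega>. xs (Suc i) \<omega> - xs i \<omega>) + vnorm G (xs i)"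
        using vnorm_triangle[of G "\<lambda>\<omega>. xs (Suc i) \<omega> - xs i \<omega>" "xs i"] by simp
      have a1: "\<epsilon> * ((1 + \<epsilon>) ^ i * N) + ((1 + \<epsilon>) ^ i - 1) * N = ((1 + \<epsilon>) ^ Suc i - 1) * N"
        by (simp add: algebra_simps)
      have a2: "\<epsilon> * ((1 + \<epsilon>) ^ i * N) + (1 + \<epsilon>) ^ i * N = (1 + \<epsilon>) ^ Suc i * N"
        by (simp add: algebra_simps)
      show ?case using s t1 t2 IH a1 a2 by linarith
    qed
    have "vnorm G (\<lambda>\<omega>. xs ?n \<omega> - contract G T0 \<omega>) = vnorm G (\<lambda>\<omega>. xs ?n \<omega> - xs 0 \<omega>)"
      by (rule vnorm_cong) (use H in auto)
    also have "\<dots> \<le> ((1 + \<epsilon>) ^ ?n - 1) * N" using ind[of ?n] by simp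
    finally have "vnorm G (\<lambda>\<omega>. xs ?n \<omega> - contract G T0 \<omega>) / N \<le> (1 + \<epsilon>) ^ ?n - 1"
      using Npos by (simp add: divide_le_eq)
    also have "\<dots> \<le> real ?n * \<epsilon> + 3 ^ ?n * \<epsilon>\<^sup>2" using pow_bound[of \<epsilon> ?n] e by simp
    finally show "vnorm G (\<lambda>\<omega>. xs ?n \<omega> - contract G T0 \<omega>) / vnorm G (contract G T0)
              \<le> real ?n * \<epsilon> + 3 ^ ?n * \<epsilon>\<^sup>2" by (simp add: N_def)
  qed simp
qed

end
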